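(* Let $J_1=\sigma_1/2$, $J_2=\sigma_2/2$ on $\mathbb{C}^2$, and let $\#(x,y)=(\#_{ij}(x,y))_{i,j=1,2}$ be a $2\times2$-matrix-valued tempered distribution on $\mathbb{R}^2$ (components in the standard basis, i.e. the eigenbasis of $\sigma_3$) such that, for every density operator $\rho$, the distribution $P_\rho(x,y)=\mathrm{Tr}[\#(x,y)\rho]$ has the correct marginals: $\int P_\rho(x,y)\,dy=\sum_{\alpha=\pm1/2}\mathrm{Tr}[E_{J_1}(\alpha)\rho]\,\delta(x-\alpha)$ and $\int P_\rho(x,y)\,dx=\sum_{\beta=\pm1/2}\mathrm{Tr}[E_{J_2}(\beta)\rho]\,\delta(y-\beta)$. Then the map $\rho\mapsto P_\rho$ is injective on density operators on $\mathbb{C}^2$ if and only if $\#_{11}\neq\#_{22}$ (as distributions).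
   Context: Pauli matrices: $\sigma_1=\begin{pmatrix}0&1\\1&0\end{pmatrix}$, $\sigma_2=\begin{pmatrix}0&-i\\i&0\end{pmatrix}$, $\sigma_3=\begin{pmatrix}1&0\\0&-1\end{pmatrix}$. $E_{A}(\alpha)$ denotes the orthogonal projection onto the eigenspace of the Hermitian operator $A$ with eigenvalue $\alpha$. A density operator is a positive semidefinite trace-one operator. *)

theory Defs
  imports "HOL-Analysis.Analysis"
begin

definition pd1 :: "(real \<Rightarrow> complex) \<Rightarrow> real \<Rightarrow> complex" where
  "pd1 f = (\<lambda>x. vector_derivative f (at x))"

definition smooth1 :: "(real \<Rightarrow> complex) \<Rightarrow> bool" where
  "smooth1 f \<longleftrightarrow> (\<forall>k x. ((pd1 ^^ k) f) differentiable (at x))"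

definition schwartz1 :: "(real \<Rightarrow> complex) \<Rightarrow> bool" where
  "schwartz1 f \<longleftrightarrow> smooth1 f \<and>
     (\<forall>m k. \<exists>C. \<forall>x. (1 + x\<^sup>2) ^ m * norm ((pd1 ^^ k) f x) \<le> C)"

definition pdx :: "(real \<times> real \<Rightarrow> complex) \<Rightarrow> real \<times> real \<Rightarrow> complex" where
  "pdx f = (\<lambda>(x, y). vector_derivative (\<lambda>t. f (t, y)) (at x))"

definition pdy :: "(real \<times> real \<Rightarrow> complex) \<Rightarrow> real \<times> real \<Rightarrow> complex" where
  "pdy f = (\<lambda>(x, y). vector_derivative (\<lambda>t. f (x, t)) (at y))"

text \<open>Iterated partial derivative; True = d/dx, False = d/dy.\<close>
fun pderivs :: "bool list \<Rightarrow> (real \<times> real \<Rightarrow> complex) \<Rightarrow> real \<times> real \<Rightarrow> complex" where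
  "pderivs [] f = f"
| "pderivs (b # bs) f = (if b then pdx else pdy) (pderivs bs f)"

definition smooth2 :: "(real \<times> real \<Rightarrow> complex) \<Rightarrow> bool" where
  "smooth2 f \<longleftrightarrow> (\<forall>ds. continuous_on UNIV (pderivs ds f) \<and>
     (\<forall>x y. (\<lambda>t. pderivs ds f (t, y)) differentiable (at x) \<and>
            (\<lambda>t. pderivs ds f (x, t)) differentiable (at y)))"

definition schwartz2 :: "(real \<times> real \<Rightarrow> complex) \<Rightarrow> bool" where
  "schwartz2 f \<longleftrightarrow> smooth2 f \<and>
     (\<forall>m ds. \<exists>C. \<forall>x y. (1 + x\<^sup>2 + y\<^sup>2) ^ m * norm (pderivs ds f (x, y)) \<le> C)"

definition seminorm2 :: "nat \<Rightarrow> bool list \<Rightarrow> (real \<times> real \<Rightarrow> complex) \<Rightarrow> real" where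
  "seminorm2 m ds f = (SUP z. (1 + (fst z)\<^sup>2 + (snd z)\<^sup>2) ^ m * norm (pderivs ds f z))"

text \<open>Values outside
  the Schwartz space are irrelevant.\<close>
definition tempered2 :: "((real \<times> real \<Rightarrow> complex) \<Rightarrow> complex) \<Rightarrow> bool" where
  "tempered2 T \<longleftrightarrow>
     (\<forall>f g. schwartz2 f \<longrightarrow> schwartz2 g \<longrightarrow> T (\<lambda>z. f z + g z) = T f + T g) \<and>
     (\<forall>c f. schwartz2 f \<longrightarrow> T (\<lambda>z. c * f z) = c * T f) \<and>
     (\<exists>C N. \<forall>f. schwartz2 f \<longrightarrow>
        norm (T f) \<le> C * (\<Sum>m\<le>N. \<Sum>ds\<in>{ds. length ds \<le> N}. seminorm2 m ds f))"

text \<open>\<open>\<integral> T dy = M\<close>: for all test functions phi(x) and all Schwartz cut-offs chi with chi 0 = 1,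
  T(phi(x) chi(eps y)) tends to M(phi) as eps tends to 0+.\<close>
definition has_x_marginal ::
  "((real \<times> real \<Rightarrow> complex) \<Rightarrow> complex) \<Rightarrow> ((real \<Rightarrow> complex) \<Rightarrow> complex) \<Rightarrow> bool" where
  "has_x_marginal T M \<longleftrightarrow> (\<forall>\<phi> \<psi>. schwartz1 \<phi> \<longrightarrow> schwartz1 \<psi> \<longrightarrow> \<psi> 0 = 1 \<longrightarrow>
     ((\<lambda>\<epsilon>. T (\<lambda>(x, y). \<phi> x * \<psi> (\<epsilon> * y))) \<longlongrightarrow> M \<phi>) (at_right 0))"

definition has_y_marginal ::
  "((real \<times> real \<Rightarrow> complex) \<Rightarrow> complex) \<Rightarrow> ((real \<Rightarrow> complex) \<Rightarrow> complex) \<Rightarrow> bool" where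
  "has_y_marginal T M \<longleftrightarrow> (\<forall>\<phi> \<psi>. schwartz1 \<phi> \<longrightarrow> schwartz1 \<psi> \<longrightarrow> \<psi> 0 = 1 \<longrightarrow>
     ((\<lambda>\<epsilon>. T (\<lambda>(x, y). \<psi> (\<epsilon> * x) * \<phi> y)) \<longlongrightarrow> M \<phi>) (at_right 0))"

definition sigma1 :: "complex^2^2" where
  "sigma1 = (\<chi> i j. if i = j then 0 else 1)"

definition sigma2 :: "complex^2^2" where
  "sigma2 = (\<chi> i j. if i = 1 \<and> j = 2 then - \<i> else if i = 2 \<and> j = 1 then \<i> else 0)"

definition sigma3 :: "complex^2^2" where
  "sigma3 = (\<chi> i j. if i = j then (if i = 1 then 1 else -1) else 0)"

definition J1 :: "complex^2^2" where "J1 = (\<chi> i j. sigma1 $ i $ j / 2)"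
definition J2 :: "complex^2^2" where "J2 = (\<chi> i j. sigma2 $ i $ j / 2)"

definition mat_adj :: "complex^'n^'n \<Rightarrow> complex^'n^'n" where
  "mat_adj A = (\<chi> i j. cnj (A $ j $ i))"

definition eigenproj :: "complex^'n^'n \<Rightarrow> complex \<Rightarrow> complex^'n^'n" where
  "eigenproj A \<alpha> = (THE P. P ** P = P \<and> mat_adj P = P \<and>
      range (\<lambda>v. P *v v) = {v. A *v v = \<alpha> *s v})"

definition density_op :: "complex^'n^'n \<Rightarrow> bool" where
  "density_op \<rho> \<longleftrightarrow> (\<forall>v. Im (\<Sum>i\<in>UNIV. cnj (v $ i) * (\<rho> *v v) $ i) = 0 \<and>
                          Re (\<Sum>i\<in>UNIV. cnj (v $ i) * (\<rho> *v v) $ i) \<ge> 0)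
                    \<and> trace \<rho> = 1"

text \<open>P_rho = Tr[# rho] as a distribution.\<close>
definition Pdist :: "(2 \<Rightarrow> 2 \<Rightarrow> (real \<times> real \<Rightarrow> complex) \<Rightarrow> complex) \<Rightarrow> complex^2^2
    \<Rightarrow> (real \<times> real \<Rightarrow> complex) \<Rightarrow> complex" where
  "Pdist S \<rho> = (\<lambda>f. \<Sum>i\<in>UNIV. \<Sum>j\<in>UNIV. S i j f * \<rho> $ j $ i)"

end

theory Submission
  imports Defs "HOL-Computational_Algebra.Polynomial"
begin



lemma exp_ge_pow_fact:
  fixes x :: real assumes "x \<ge> 0" shows "x ^ n / fact n \<le> exp x"
proof -
  have s: "(\<lambda>n. x^n /\<^sub>R fact n) sums exp x" by (rule exp_converges)
  have "x ^ n / fact n = sum (\<lambda>n. x^n /\<^sub>R fact n) {n}" by (simp add: divide_simps)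
  also have "\<dots> \<le> exp x"
    unfolding sums_unique[OF s]
    apply (rule sum_le_suminf)
    using s assms by (auto simp: sums_summable)
  finally show ?thesis .
qed



lemma gauss_pow_bound:
  fixes a :: real assumes a: "a > 0"
  shows "\<exists>C. \<forall>x::real. (1+x\<^sup>2)^N * exp(-a*x\<^sup>2) \<le> C"
proof (intro exI allI)
  fix x :: real
  define t where "t = 1 + x\<^sup>2"
  have t0: "t \<ge> 0" unfolding t_def by simp
  have "(a*t)^N / fact N \<le> exp (a*t)" using exp_ge_pow_fact[of "a*t" N] a t0 by simp
  hence "a^N * t^N \<le> fact N * exp (a*t)" by (simp add: divide_simps power_mult_distrib) (simp add: mult.commute)
  hence "t^N \<le> fact N / a^N * exp (a*t)" using a by (simp add: divide_simps mult.commute)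
  hence "t^N * exp(-(a*t)) \<le> fact N / a^N * exp (a*t) * exp(-(a*t))"
    using mult_right_mono[OF \<open>t^N \<le> fact N / a^N * exp (a*t)\<close>, of "exp(-(a*t))"] by simp
  also have "\<dots> = fact N / a^N" by (simp add: exp_minus)
  finally have 1: "t^N * exp(-(a*t)) \<le> fact N / a^N" .
  have "exp(-a*x\<^sup>2) = exp a * exp(-(a*t))" unfolding t_def
    by (simp add: algebra_simps flip: exp_add)
  hence "(1+x\<^sup>2)^N * exp(-a*x\<^sup>2) = exp a * (t^N * exp(-(a*t)))" unfolding t_def by simp
  also have "\<dots> \<le> exp a * (fact N / a^N)" using 1 by (intro mult_left_mono) auto
  finally show "(1+x\<^sup>2)^N * exp(-a*x\<^sup>2) \<le> exp a * (fact N / a^N)" .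
qed

lemma abs_pow_le_sq: "\<bar>x::real\<bar>^i \<le> (1+x\<^sup>2)^n" if "i \<le> n" for x
proof -
  have "\<bar>x\<bar> \<le> 1 + x\<^sup>2"
  proof (cases "\<bar>x\<bar> \<le> 1")
    case True then show ?thesis by (simp add: add_increasing2)
  next
    case False
    then have "\<bar>x\<bar> * 1 \<le> \<bar>x\<bar> * \<bar>x\<bar>" by (intro mult_left_mono) auto
    also have "\<dots> = x\<^sup>2" by (simp add: power2_eq_square abs_mult_self_eq)
    finally show ?thesis by simp
  qed
  hence "\<bar>x\<bar>^i \<le> (1+x\<^sup>2)^i" by (simp add: power_mono)
  also have "\<dots> \<le> (1+x\<^sup>2)^n" using that by (simp add: power_increasing)
  finally show ?thesis .
qed

lemma poly_bound:
  fixes p :: "real poly" shows "\<bar>poly p x\<bar> \<le> (\<Sum>i\<le>degree p. \<bar>coeff p i\<bar>) * (1+x\<^sup>2)^(degree p)"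
proof -
  have "\<bar>poly p x\<bar> = \<bar>\<Sum>i\<le>degree p. coeff p i * x^i\<bar>" by (simp only: poly_altdef)
  also have "\<dots> \<le> (\<Sum>i\<le>degree p. \<bar>coeff p i * x^i\<bar>)" by (rule sum_abs)
  also have "\<dots> \<le> (\<Sum>i\<le>degree p. \<bar>coeff p i\<bar> * (1+x\<^sup>2)^(degree p))"
    by (rule sum_mono) (auto simp: abs_mult power_abs intro!: mult_left_mono abs_pow_le_sq)
  also have "\<dots> = (\<Sum>i\<le>degree p. \<bar>coeff p i\<bar>) * (1+x\<^sup>2)^(degree p)" by (simp add: sum_distrib_right)
  finally show ?thesis .
qed

definition G :: "real poly \<Rightarrow> real \<Rightarrow> real \<Rightarrow> complex" where
  "G p a x = complex_of_real (poly p x * exp (- a * x\<^sup>2))"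

lemma G_bound:
  assumes a: "a > 0" shows "\<exists>C. \<forall>x. (1+x\<^sup>2)^m * norm (G p a x) \<le> C"
proof -
  obtain C where C: "\<And>x. (1+x\<^sup>2)^(m + degree p) * exp(-a*x\<^sup>2) \<le> C"
    using gauss_pow_bound[OF a] by blast
  define B where "B = (\<Sum>i\<le>degree p. \<bar>coeff p i\<bar>)"
  have B0: "B \<ge> 0" unfolding B_def by (simp add: sum_nonneg)
  show ?thesis
  proof (intro exI allI)
    fix x
    have "(1+x\<^sup>2)^m * norm (G p a x) = (1+x\<^sup>2)^m * \<bar>poly p x\<bar> * exp(-a*x\<^sup>2)"
      by (simp add: G_def abs_mult norm_mult del: of_real_mult)
    also have "\<dots> \<le> (1+x\<^sup>2)^m * (B * (1+x\<^sup>2)^(degree p)) * exp(-a*x\<^sup>2)"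
      using poly_bound[of p x] unfolding B_def[symmetric]
      by (intro mult_right_mono mult_left_mono) auto
    also have "\<dots> = B * ((1+x\<^sup>2)^(m + degree p) * exp(-a*x\<^sup>2))" by (simp add: power_add)
    also have "\<dots> \<le> B * C" using C B0 by (simp add: mult_left_mono)
    finally show "(1+x\<^sup>2)^m * norm (G p a x) \<le> B * C" .
  qed
qed

definition Gd :: "real \<Rightarrow> real poly \<Rightarrow> real poly" where
  "Gd a p = pderiv p - smult (2*a) ([:0,1:] * p)"

lemma G_deriv: "(G p a has_vector_derivative G (Gd a p) a x) (at x)"
proof -
  have eq: "poly (pderiv p) x * exp (- a * x\<^sup>2) + poly p x * (exp (- a * x\<^sup>2) * (- a * (2 * x)))
     = poly (Gd a p) x * exp (- a * x\<^sup>2)"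
    by (simp add: Gd_def algebra_simps)
  have "((\<lambda>x. poly p x * exp (- a * x\<^sup>2)) has_field_derivative
        (poly (pderiv p) x * exp (- a * x\<^sup>2) + poly p x * (exp (- a * x\<^sup>2) * (- a * (2 * x))))) (at x)"
    by (auto intro!: derivative_eq_intros poly_DERIV)
  then have "((\<lambda>x. poly p x * exp (- a * x\<^sup>2)) has_field_derivative
        (poly (Gd a p) x * exp (- a * x\<^sup>2))) (at x)" unfolding eq .
  then have "((\<lambda>x. complex_of_real (poly p x * exp (- a * x\<^sup>2))) has_vector_derivative
     of_real (poly (Gd a p) x * exp (- a * x\<^sup>2))) (at x)"
    by (rule has_vector_derivative_of_real)
  then show ?thesis unfolding G_def[abs_def] .
qed

lemma G_vd: "vector_derivative (G p a) (at x) = G (Gd a p) a x"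
  by (rule vector_derivative_at[OF G_deriv])

lemma pd1_G: "pd1 (G p a) = G (Gd a p) a"
  unfolding pd1_def by (rule ext) (rule G_vd)

lemma pd1_pow_G: "(pd1 ^^ k) (G p a) = G ((Gd a ^^ k) p) a"
  by (induction k) (simp_all add: pd1_G)

lemma schwartz1_G: assumes "a > 0" shows "schwartz1 (G p a)"
  unfolding schwartz1_def smooth1_def pd1_pow_G
proof (intro conjI allI)
  fix k x show "G ((Gd a ^^ k) p) a differentiable at x" by (rule differentiableI_vector[OF G_deriv])
next
  fix m k show "\<exists>C. \<forall>x. (1 + x\<^sup>2) ^ m * cmod (G ((Gd a ^^ k) p) a x) \<le> C"
    by (rule G_bound[OF assms])
qed




lemma pdx_G2: "pdx (\<lambda>(x,y). G p a x * G q b y) = (\<lambda>(x,y). G (Gd a p) a x * G q b y)"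
proof (rule ext, clarify)
  fix x y
  have "((\<lambda>t. G p a t * G q b y) has_vector_derivative G (Gd a p) a x * G q b y) (at x)"
    by (rule has_vector_derivative_mult_left[OF G_deriv])
  then show "pdx (\<lambda>(x,y). G p a x * G q b y) (x, y) = G (Gd a p) a x * G q b y"
    unfolding pdx_def by (simp add: vector_derivative_at)
qed

lemma pdy_G2: "pdy (\<lambda>(x,y). G p a x * G q b y) = (\<lambda>(x,y). G p a x * G (Gd b q) b y)"
proof (rule ext, clarify)
  fix x y
  have "((\<lambda>t. G p a x * G q b t) has_vector_derivative G p a x * G (Gd b q) b y) (at y)"
    by (rule has_vector_derivative_mult_right[OF G_deriv])
  then show "pdy (\<lambda>(x,y). G p a x * G q b y) (x, y) = G p a x * G (Gd b q) b y"
    unfolding pdy_def by (simp add: vector_derivative_at)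
qed

lemma pderivs_G2: "\<exists>p' q'. pderivs ds (\<lambda>(x,y). G p a x * G q b y) = (\<lambda>(x,y). G p' a x * G q' b y)"
proof (induction ds)
  case Nil then show ?case by auto
next
  case (Cons c ds)
  then obtain p' q' where e: "pderivs ds (\<lambda>(x,y). G p a x * G q b y) = (\<lambda>(x,y). G p' a x * G q' b y)"
    by blast
  show ?case
  proof (cases c)
    case True then show ?thesis using e pdx_G2 by auto
  next
    case False then show ?thesis using e pdy_G2 by auto
  qed
qed

lemma cont_G2: "continuous_on UNIV (\<lambda>(x,y). G p a x * G q b y)"
proof -
  have c: "continuous_on UNIV (\<lambda>z. G p a (fst z) * G q b (snd z))"
    unfolding G_def by (intro continuous_intros)
  have eq: "(\<lambda>z. G p a (fst z) * G q b (snd z)) = (\<lambda>(x,y). G p a x * G q b y)" by auto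
  show ?thesis using c unfolding eq .
qed

lemma bound_G2:
  assumes "a > 0" "b > 0"
  shows "\<exists>C. \<forall>x y. (1 + x\<^sup>2 + y\<^sup>2) ^ m * norm ((\<lambda>(x,y). G p a x * G q b y) (x, y)) \<le> C"
proof -
  obtain C1 where C1: "\<And>x. (1+x\<^sup>2)^m * norm (G p a x) \<le> C1" using G_bound[OF assms(1)] by blast
  obtain C2 where C2: "\<And>y. (1+y\<^sup>2)^m * norm (G q b y) \<le> C2" using G_bound[OF assms(2)] by blast
  show ?thesis
  proof (intro exI allI)
    fix x y :: real
    have "1 + x\<^sup>2 + y\<^sup>2 \<le> (1+x\<^sup>2) * (1+y\<^sup>2)" by (simp add: algebra_simps)
    hence pm: "(1 + x\<^sup>2 + y\<^sup>2) ^ m \<le> ((1+x\<^sup>2) * (1+y\<^sup>2))^m"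
      by (intro power_mono) (auto simp: add_nonneg_nonneg)
    have "(1 + x\<^sup>2 + y\<^sup>2) ^ m * norm (G p a x * G q b y) \<le>
        ((1+x\<^sup>2)^m * norm (G p a x)) * ((1+y\<^sup>2)^m * norm (G q b y))"
      using mult_left_mono[OF pm, of "norm (G p a x) * norm (G q b y)"]
      by (simp add: norm_mult power_mult_distrib mult_ac)
    also have "\<dots> \<le> C1 * C2"
      by (intro mult_mono C1 C2) (auto intro: order_trans[OF _ C1])
    finally show "(1 + x\<^sup>2 + y\<^sup>2) ^ m * norm ((\<lambda>(x,y). G p a x * G q b y) (x, y)) \<le> C1 * C2"
      by simp
  qed
qed

lemma schwartz2_G2:
  assumes "a > 0" "b > 0"
  shows "schwartz2 (\<lambda>(x,y). G p a x * G q b y)"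
  unfolding schwartz2_def smooth2_def
proof (intro conjI allI)
  fix ds
  obtain p' q' where e: "pderivs ds (\<lambda>(x,y). G p a x * G q b y) = (\<lambda>(x,y). G p' a x * G q' b y)"
    using pderivs_G2 by blast
  show "continuous_on UNIV (pderivs ds (\<lambda>(x,y). G p a x * G q b y))" unfolding e by (rule cont_G2)
  fix x y
  show "(\<lambda>t. pderivs ds (\<lambda>(x,y). G p a x * G q b y) (t, y)) differentiable at x"
    unfolding e using differentiableI_vector[OF has_vector_derivative_mult_left[OF G_deriv]] by simp
  show "(\<lambda>t. pderivs ds (\<lambda>(x,y). G p a x * G q b y) (x, t)) differentiable at y"
    unfolding e using differentiableI_vector[OF has_vector_derivative_mult_right[OF G_deriv]] by simp
next
  fix m ds
  obtain p' q' where e: "pderivs ds (\<lambda>(x,y). G p a x * G q b y) = (\<lambda>(x,y). G p' a x * G q' b y)"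
    using pderivs_G2 by blast
  show "\<exists>C. \<forall>x y. (1 + x\<^sup>2 + y\<^sup>2) ^ m * cmod (pderivs ds (\<lambda>(x,y). G p a x * G q b y) (x, y)) \<le> C"
    unfolding e by (rule bound_G2[OF assms])
qed




lemma mat_adj_mult: "mat_adj (A ** B) = mat_adj B ** mat_adj A"
  by (simp add: mat_adj_def matrix_matrix_mult_def vec_eq_iff cnj_sum mult.commute)

lemma mat_adj_adj: "mat_adj (mat_adj A) = A"
  by (simp add: mat_adj_def vec_eq_iff)

lemma eigenproj_eq:
  fixes P :: "complex^'n^'n"
  assumes P: "P ** P = P" "mat_adj P = P" "range (\<lambda>v. P *v v) = {v. A *v v = \<alpha> *s v}"
  shows "eigenproj A \<alpha> = P"
  unfolding eigenproj_def
proof (rule the_equality)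
  show "P ** P = P \<and> mat_adj P = P \<and> range (\<lambda>v. P *v v) = {v. A *v v = \<alpha> *s v}" using P by blast
next
  fix Q :: "complex^'n^'n"
  assume Q: "Q ** Q = Q \<and> mat_adj Q = Q \<and> range (\<lambda>v. Q *v v) = {v. A *v v = \<alpha> *s v}"
  have fix1: "X ** Y = Y" if X: "X ** X = X" and r: "range (\<lambda>v. Y *v v) \<subseteq> range (\<lambda>v. X *v v)"
    for X Y :: "complex^'n^'n"
  proof -
    have "(X ** Y) *v v = Y *v v" for v
    proof -
      obtain w where w: "Y *v v = X *v w" using r by blast
      have "(X ** Y) *v v = X *v (X *v w)" by (simp add: w flip: matrix_vector_mul_assoc)
      also have "\<dots> = X *v w" by (simp add: matrix_vector_mul_assoc X)
      finally show ?thesis using w by simp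
    qed
    then show ?thesis by (simp add: matrix_eq)
  qed
  have PQ: "P ** Q = Q" using fix1[of P Q] P Q by blast
  have QP: "Q ** P = P" using fix1[of Q P] P Q by blast
  have "P = mat_adj P" using P by simp
  also have "\<dots> = mat_adj (Q ** P)" using QP by simp
  also have "\<dots> = mat_adj P ** mat_adj Q" by (rule mat_adj_mult)
  also have "\<dots> = P ** Q" using P Q by simp
  also have "\<dots> = Q" by (rule PQ)
  finally show "Q = P" by simp
qed

definition E1p :: "complex^2^2" where "E1p = (\<chi> i j. 1/2)"
definition E1m :: "complex^2^2" where "E1m = (\<chi> i j. if i = j then 1/2 else -1/2)"
definition E2p :: "complex^2^2" where
  "E2p = (\<chi> i j. if i = j then 1/2 else if i = 1 then -\<i>/2 else \<i>/2)"
definition E2m :: "complex^2^2" where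
  "E2m = (\<chi> i j. if i = j then 1/2 else if i = 1 then \<i>/2 else -\<i>/2)"

lemmas cs = vec_eq_iff forall_2 sum_2 matrix_matrix_mult_def matrix_vector_mult_def mat_adj_def
  J1_def J2_def sigma1_def sigma2_def E1p_def E1m_def E2p_def E2m_def

lemma E1p_eq: "eigenproj J1 (of_real (1/2)) = E1p"
proof (rule eigenproj_eq)
  show "E1p ** E1p = E1p" by (simp add: cs)
  show "mat_adj E1p = E1p" by (simp add: cs)
  show "range (\<lambda>v. E1p *v v) = {v. J1 *v v = of_real (1/2) *s v}"
  proof safe
    fix v show "J1 *v (E1p *v v) = of_real (1/2) *s (E1p *v v)" by (simp add: cs algebra_simps)
  next
    fix v :: "complex^2" assume h: "J1 *v v = of_real (1/2) *s v"
    have h1: "(J1 *v v)$1 = (of_real (1/2) *s v)$1" using h by simp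
    have h2: "(J1 *v v)$2 = (of_real (1/2) *s v)$2" using h by simp
    have e: "v$2 = v$1" using h1 by (simp add: cs field_simps)
    have "v = E1p *v v" using e by (simp add: cs field_simps)
    thus "v \<in> range (\<lambda>v. E1p *v v)" by blast
  qed
qed

lemma E1m_eq: "eigenproj J1 (of_real (-1/2)) = E1m"
proof (rule eigenproj_eq)
  show "E1m ** E1m = E1m" by (simp add: cs)
  show "mat_adj E1m = E1m" by (simp add: cs)
  show "range (\<lambda>v. E1m *v v) = {v. J1 *v v = of_real (-1/2) *s v}"
  proof safe
    fix v show "J1 *v (E1m *v v) = of_real (-1/2) *s (E1m *v v)" by (simp add: cs algebra_simps)
  next
    fix v :: "complex^2" assume h: "J1 *v v = of_real (-1/2) *s v"
    have h1: "(J1 *v v)$1 = (of_real (-1/2) *s v)$1" using h by simp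
    have h2: "(J1 *v v)$2 = (of_real (-1/2) *s v)$2" using h by simp
    have e: "v$2 = - v$1" using h1 by (simp add: cs field_simps)
    have "v = E1m *v v" using e by (simp add: cs field_simps)
    thus "v \<in> range (\<lambda>v. E1m *v v)" by blast
  qed
qed

lemma E2p_eq: "eigenproj J2 (of_real (1/2)) = E2p"
proof (rule eigenproj_eq)
  show "E2p ** E2p = E2p" by (simp add: cs)
  show "mat_adj E2p = E2p" by (simp add: cs)
  show "range (\<lambda>v. E2p *v v) = {v. J2 *v v = of_real (1/2) *s v}"
  proof safe
    fix v show "J2 *v (E2p *v v) = of_real (1/2) *s (E2p *v v)" by (simp add: cs algebra_simps)
  next
    fix v :: "complex^2" assume h: "J2 *v v = of_real (1/2) *s v"
    have h1: "(J2 *v v)$1 = (of_real (1/2) *s v)$1" using h by simp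
    have h2: "(J2 *v v)$2 = (of_real (1/2) *s v)$2" using h by simp
    have e: "v$1 = - \<i> * v$2" using h1 by (simp add: cs field_simps)
    have "v = E2p *v v" using e by (simp add: cs field_simps)
    thus "v \<in> range (\<lambda>v. E2p *v v)" by blast
  qed
qed

lemma E2m_eq: "eigenproj J2 (of_real (-1/2)) = E2m"
proof (rule eigenproj_eq)
  show "E2m ** E2m = E2m" by (simp add: cs)
  show "mat_adj E2m = E2m" by (simp add: cs)
  show "range (\<lambda>v. E2m *v v) = {v. J2 *v v = of_real (-1/2) *s v}"
  proof safe
    fix v show "J2 *v (E2m *v v) = of_real (-1/2) *s (E2m *v v)" by (simp add: cs algebra_simps)
  next
    fix v :: "complex^2" assume h: "J2 *v v = of_real (-1/2) *s v"
    have h1: "(J2 *v v)$1 = (of_real (-1/2) *s v)$1" using h by simp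
    have h2: "(J2 *v v)$2 = (of_real (-1/2) *s v)$2" using h by simp
    have e: "v$1 = \<i> * v$2" using h1 by (simp add: cs field_simps)
    have "v = E2m *v v" using e by (simp add: cs field_simps)
    thus "v \<in> range (\<lambda>v. E2m *v v)" by blast
  qed
qed




lemma trace_E1: "trace (E1p ** \<rho>) - trace (E1m ** \<rho>) = \<rho>$1$2 + \<rho>$2$1"
  by (simp add: cs trace_def field_simps)

lemma trace_E2: "trace (E2p ** \<rho>) - trace (E2m ** \<rho>) = \<i> * (\<rho>$1$2 - \<rho>$2$1)"
  by (simp add: cs trace_def field_simps)

definition c0 :: complex where "c0 = G [:0,1:] 1 (1/2)"

lemma c0_nz: "c0 \<noteq> 0" by (simp add: c0_def G_def)
lemma G_neg: "G [:0,1:] 1 (-1/2) = - c0" by (simp add: c0_def G_def)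

lemma sum_x: "(\<Sum>\<alpha>\<in>{1/2, -1/2::real}. trace (eigenproj J1 (of_real \<alpha>) ** \<rho>) * G [:0,1:] 1 \<alpha>)
   = c0 * (\<rho>$1$2 + \<rho>$2$1)"
proof -
  have "(\<Sum>\<alpha>\<in>{1/2, -1/2::real}. trace (eigenproj J1 (of_real \<alpha>) ** \<rho>) * G [:0,1:] 1 \<alpha>)
     = trace (eigenproj J1 (of_real (1/2)) ** \<rho>) * G [:0,1:] 1 (1/2)
       + trace (eigenproj J1 (of_real (-1/2)) ** \<rho>) * G [:0,1:] 1 (-1/2)"
    by (subst sum.insert) auto
  also have "\<dots> = c0 * (trace (E1p ** \<rho>) - trace (E1m ** \<rho>))"
    unfolding E1p_eq E1m_eq G_neg c0_def[symmetric] by (simp add: algebra_simps)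
  finally show ?thesis by (simp add: trace_E1)
qed

lemma sum_y: "(\<Sum>\<alpha>\<in>{1/2, -1/2::real}. trace (eigenproj J2 (of_real \<alpha>) ** \<rho>) * G [:0,1:] 1 \<alpha>)
   = c0 * (\<i> * (\<rho>$1$2 - \<rho>$2$1))"
proof -
  have "(\<Sum>\<alpha>\<in>{1/2, -1/2::real}. trace (eigenproj J2 (of_real \<alpha>) ** \<rho>) * G [:0,1:] 1 \<alpha>)
     = trace (eigenproj J2 (of_real (1/2)) ** \<rho>) * G [:0,1:] 1 (1/2)
       + trace (eigenproj J2 (of_real (-1/2)) ** \<rho>) * G [:0,1:] 1 (-1/2)"
    by (subst sum.insert) auto
  also have "\<dots> = c0 * (trace (E2p ** \<rho>) - trace (E2m ** \<rho>))"
    unfolding E2p_eq E2m_eq G_neg c0_def[symmetric] by (simp add: algebra_simps)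
  finally show ?thesis by (simp add: trace_E2)
qed

lemma Pdist2: "Pdist S \<rho> f = S 1 1 f * \<rho>$1$1 + S 1 2 f * \<rho>$2$1 + S 2 1 f * \<rho>$1$2 + S 2 2 f * \<rho>$2$2"
  by (simp add: Pdist_def sum_2)

lemma gx_eq: "(\<lambda>(x,y). G [:0,1:] 1 x * G [:1:] 1 (\<epsilon>*y)) = (\<lambda>(x,y). G [:0,1:] 1 x * G [:1:] (\<epsilon>\<^sup>2) y)"
  by (auto simp: G_def power_mult_distrib)

lemma gy_eq: "(\<lambda>(x,y). G [:1:] 1 (\<epsilon>*x) * G [:0,1:] 1 y) = (\<lambda>(x,y). G [:1:] (\<epsilon>\<^sup>2) x * G [:0,1:] 1 y)"
  by (auto simp: G_def power_mult_distrib)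

definition rho1 :: "complex^2^2" where "rho1 = (\<chi> i j. if i = 1 \<and> j = 1 then 1 else 0)"
definition rho2 :: "complex^2^2" where "rho2 = (\<chi> i j. if i = 2 \<and> j = 2 then 1 else 0)"

lemma cnj_mult_self: "cnj z * z = complex_of_real ((cmod z)\<^sup>2)"
  by (metis complex_norm_square mult.commute)

lemma dens_rho1: "density_op rho1"
  unfolding density_op_def by (simp add: rho1_def sum_2 matrix_vector_mult_def trace_def cnj_mult_self)

lemma dens_rho2: "density_op rho2"
  unfolding density_op_def by (simp add: rho2_def sum_2 matrix_vector_mult_def trace_def cnj_mult_self)




theorem lemma2:
  fixes S :: "2 \<Rightarrow> 2 \<Rightarrow> (real \<times> real \<Rightarrow> complex) \<Rightarrow> complex"
  assumes "\<forall>i j. tempered2 (S i j)"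
    and "\<forall>\<rho>::complex^2^2. density_op \<rho> \<longrightarrow> has_x_marginal (Pdist S \<rho>)
           (\<lambda>\<phi>. \<Sum>\<alpha>\<in>{1/2, -1/2::real}. trace (eigenproj J1 (of_real \<alpha>) ** \<rho>) * \<phi> \<alpha>)"
    and "\<forall>\<rho>::complex^2^2. density_op \<rho> \<longrightarrow> has_y_marginal (Pdist S \<rho>)
           (\<lambda>\<phi>. \<Sum>\<beta>\<in>{1/2, -1/2::real}. trace (eigenproj J2 (of_real \<beta>) ** \<rho>) * \<phi> \<beta>)"
  shows "(\<forall>\<rho> \<rho>' :: complex^2^2. density_op \<rho> \<longrightarrow> density_op \<rho>' \<longrightarrow>
            (\<forall>f. schwartz2 f \<longrightarrow> Pdist S \<rho> f = Pdist S \<rho>' f) \<longrightarrow> \<rho> = \<rho>')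
         \<longleftrightarrow> (\<exists>f. schwartz2 f \<and> S 1 1 f \<noteq> S 2 2 f)"
proof
  assume inj: "\<forall>\<rho> \<rho>' :: complex^2^2. density_op \<rho> \<longrightarrow> density_op \<rho>' \<longrightarrow>
            (\<forall>f. schwartz2 f \<longrightarrow> Pdist S \<rho> f = Pdist S \<rho>' f) \<longrightarrow> \<rho> = \<rho>'"
  show "\<exists>f. schwartz2 f \<and> S 1 1 f \<noteq> S 2 2 f"
  proof (rule ccontr)
    assume "\<not> (\<exists>f. schwartz2 f \<and> S 1 1 f \<noteq> S 2 2 f)"
    hence eq: "\<forall>f. schwartz2 f \<longrightarrow> Pdist S rho1 f = Pdist S rho2 f"
      by (auto simp: Pdist2 rho1_def rho2_def)
    have "rho1 = rho2" using inj dens_rho1 dens_rho2 eq by blast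
    moreover have "rho1 \<noteq> rho2" by (simp add: rho1_def rho2_def vec_eq_iff forall_2)
    ultimately show False by simp
  qed
next
  assume "\<exists>f. schwartz2 f \<and> S 1 1 f \<noteq> S 2 2 f"
  then obtain f0 where f0: "schwartz2 f0" "S 1 1 f0 \<noteq> S 2 2 f0" by blast
  define \<phi> where "\<phi> = G [:0,1:] 1"
  define \<psi> where "\<psi> = G [:1:] 1"
  have s\<phi>: "schwartz1 \<phi>" unfolding \<phi>_def by (rule schwartz1_G) simp
  have s\<psi>: "schwartz1 \<psi>" unfolding \<psi>_def by (rule schwartz1_G) simp
  have \<psi>0: "\<psi> 0 = 1" by (simp add: \<psi>_def G_def)
  have gx: "schwartz2 (\<lambda>(x,y). \<phi> x * \<psi> (\<epsilon>*y))" if "\<epsilon> > 0" for \<epsilon>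
    unfolding \<phi>_def \<psi>_def gx_eq by (rule schwartz2_G2) (use that in auto)
  have gy: "schwartz2 (\<lambda>(x,y). \<psi> (\<epsilon>*x) * \<phi> y)" if "\<epsilon> > 0" for \<epsilon>
    unfolding \<phi>_def \<psi>_def gy_eq by (rule schwartz2_G2) (use that in auto)
  show "\<forall>\<rho> \<rho>' :: complex^2^2. density_op \<rho> \<longrightarrow> density_op \<rho>' \<longrightarrow>
            (\<forall>f. schwartz2 f \<longrightarrow> Pdist S \<rho> f = Pdist S \<rho>' f) \<longrightarrow> \<rho> = \<rho>'"
  proof (intro allI impI)
    fix \<rho> \<rho>' :: "complex^2^2"
    assume d: "density_op \<rho>" and d': "density_op \<rho>'"
      and P: "\<forall>f. schwartz2 f \<longrightarrow> Pdist S \<rho> f = Pdist S \<rho>' f"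
    have ev: "eventually (\<lambda>\<epsilon>. \<epsilon> > (0::real)) (at_right 0)" by (rule eventually_at_right_less)
    have lx: "((\<lambda>\<epsilon>. Pdist S r (\<lambda>(x, y). \<phi> x * \<psi> (\<epsilon> * y))) \<longlongrightarrow>
        (\<Sum>\<alpha>\<in>{1/2, -1/2::real}. trace (eigenproj J1 (of_real \<alpha>) ** r) * \<phi> \<alpha>)) (at_right 0)"
      if "density_op r" for r
      using assms(2) that s\<phi> s\<psi> \<psi>0 unfolding has_x_marginal_def by blast
    have ly: "((\<lambda>\<epsilon>. Pdist S r (\<lambda>(x, y). \<psi> (\<epsilon> * x) * \<phi> y)) \<longlongrightarrow>
        (\<Sum>\<alpha>\<in>{1/2, -1/2::real}. trace (eigenproj J2 (of_real \<alpha>) ** r) * \<phi> \<alpha>)) (at_right 0)"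
      if "density_op r" for r
      using assms(3) that s\<phi> s\<psi> \<psi>0 unfolding has_y_marginal_def by blast
    have evx: "eventually (\<lambda>\<epsilon>. Pdist S \<rho> (\<lambda>(x, y). \<phi> x * \<psi> (\<epsilon> * y))
                 = Pdist S \<rho>' (\<lambda>(x, y). \<phi> x * \<psi> (\<epsilon> * y))) (at_right 0)"
      using ev by eventually_elim (use P gx in blast)
    have evy: "eventually (\<lambda>\<epsilon>. Pdist S \<rho> (\<lambda>(x, y). \<psi> (\<epsilon> * x) * \<phi> y)
                 = Pdist S \<rho>' (\<lambda>(x, y). \<psi> (\<epsilon> * x) * \<phi> y)) (at_right 0)"
      using ev by eventually_elim (use P gy in blast)
    have X: "(\<Sum>\<alpha>\<in>{1/2, -1/2::real}. trace (eigenproj J1 (of_real \<alpha>) ** \<rho>) * \<phi> \<alpha>)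
           = (\<Sum>\<alpha>\<in>{1/2, -1/2::real}. trace (eigenproj J1 (of_real \<alpha>) ** \<rho>') * \<phi> \<alpha>)"
      by (rule tendsto_unique[OF _ Lim_transform_eventually[OF lx[OF d] evx] lx[OF d']]) simp
    have Y: "(\<Sum>\<alpha>\<in>{1/2, -1/2::real}. trace (eigenproj J2 (of_real \<alpha>) ** \<rho>) * \<phi> \<alpha>)
           = (\<Sum>\<alpha>\<in>{1/2, -1/2::real}. trace (eigenproj J2 (of_real \<alpha>) ** \<rho>') * \<phi> \<alpha>)"
      by (rule tendsto_unique[OF _ Lim_transform_eventually[OF ly[OF d] evy] ly[OF d']]) simp
    have X': "\<rho>$1$2 + \<rho>$2$1 = \<rho>'$1$2 + \<rho>'$2$1"
      using X c0_nz unfolding \<phi>_def sum_x by simp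
    have Y': "\<rho>$1$2 - \<rho>$2$1 = \<rho>'$1$2 - \<rho>'$2$1"
      using Y c0_nz unfolding \<phi>_def sum_y by simp
    have "(\<rho>$1$2 + \<rho>$2$1) + (\<rho>$1$2 - \<rho>$2$1) = (\<rho>'$1$2 + \<rho>'$2$1) + (\<rho>'$1$2 - \<rho>'$2$1)"
      using X' Y' by simp
    hence a12: "\<rho>$1$2 = \<rho>'$1$2" by simp
    have "(\<rho>$1$2 + \<rho>$2$1) - (\<rho>$1$2 - \<rho>$2$1) = (\<rho>'$1$2 + \<rho>'$2$1) - (\<rho>'$1$2 - \<rho>'$2$1)"
      using X' Y' by simp
    hence a21: "\<rho>$2$1 = \<rho>'$2$1" by simp
    have tr: "\<rho>$2$2 = 1 - \<rho>$1$1" using d unfolding density_op_def trace_def sum_2 by (simp add: algebra_simps)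
    have tr': "\<rho>'$2$2 = 1 - \<rho>'$1$1" using d' unfolding density_op_def trace_def sum_2 by (simp add: algebra_simps)
    have pe: "S 1 1 f0 * \<rho>$1$1 + S 2 2 f0 * \<rho>$2$2 = S 1 1 f0 * \<rho>'$1$1 + S 2 2 f0 * \<rho>'$2$2"
      using P f0(1) a12 a21 unfolding Pdist2 by auto
    have "(S 1 1 f0 - S 2 2 f0) * (\<rho>$1$1 - \<rho>'$1$1) =
        (S 1 1 f0 * \<rho>$1$1 + S 2 2 f0 * \<rho>$2$2) - (S 1 1 f0 * \<rho>'$1$1 + S 2 2 f0 * \<rho>'$2$2)"
      unfolding tr tr' by (simp add: algebra_simps)
    also have "\<dots> = 0" using pe by simp
    finally have a11: "\<rho>$1$1 = \<rho>'$1$1" using f0(2) by simp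
    have a22: "\<rho>$2$2 = \<rho>'$2$2" using tr tr' a11 by simp
    show "\<rho> = \<rho>'" using a11 a12 a21 a22 by (simp add: vec_eq_iff forall_2)
  qed
qed


end
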